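(* Let $q\equiv1\pmod4$ be a prime power, let $i_2$ be an even integer with $0<i_2<(q+1)/2$, and let $r$ be a positive integer with $\gcd(r,q-1)=\gcd(r-i_2,(q+1)/2)=\gcd(r-2i_2,(q+1)/2)=1$. Let $b\in\mathbb F_{q^2}^*$ satisfy $(2/b)^{(q+1)/2}=1$. Then $$X^r\bigl(1-X^{(q^2-1)/2}+bX^{i_2(q-1)}\bigr)$$ is a permutation polynomial of $\mathbb F_{q^2}$. *)

theory Defs
  imports "HOL-Computational_Algebra.Polynomial" "HOL-Computational_Algebra.Primes"
begin

definition prime_power :: "nat \<Rightarrow> bool" where
  "prime_power q \<longleftrightarrow> (\<exists>p k. prime p \<and> k \<ge> 1 \<and> q = p ^ k)"

definition permutation_polynomial :: "'a::{finite,comm_ring_1} poly \<Rightarrow> bool" where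
  "permutation_polynomial P \<longleftrightarrow> bij (poly P)"

end

theory Submission
  imports Defs
begin

lemma pow_card_same:
  fixes x :: "'a::{field,finite}"
  shows "x ^ card (UNIV :: 'a set) = x"
proof (cases "x = 0")
  case False
  have "x * (\<Prod>y\<in>UNIV-{0}. x * y) = x * x ^ (card (UNIV :: 'a set) - 1) * \<Prod>(UNIV-{0})"
    by (simp add: prod.distrib mult_ac)
  also have "x * x ^ (card (UNIV :: 'a set) - 1) = x ^ Suc (card (UNIV :: 'a set) - 1)"
    by (subst power_Suc) auto
  also have "Suc (card (UNIV :: 'a set) - 1) = card (UNIV :: 'a set)"
    using finite_UNIV_card_ge_0[where ?'a = 'a] by simp
  also have "(\<Prod>y\<in>UNIV-{0}. x * y) = (\<Prod>y\<in>UNIV-{0}. y)"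
    by (rule prod.reindex_bij_witness[of _ "\<lambda>y. y / x" "\<lambda>y. x * y"]) (use False in auto)
  finally show ?thesis
    by simp
qed (use finite_UNIV_card_ge_0[where ?'a = 'a] in auto)

lemma pm: "1 \<le> n \<Longrightarrow> (a::'a::comm_ring_1) ^ (n - 1) * a = a ^ n"
  by (cases n) (auto simp: mult.commute)

lemma cross:
  fixes U V A B k :: "'a::field"
  assumes "A \<noteq> 0" "B \<noteq> 0" "V \<noteq> 0" "k \<noteq> 0" "U * k / A = V * k / B"
  shows "U / V = A / B"
proof -
  have "U * k * B = V * k * A" using assms(1,2,5) by (simp add: frac_eq_eq)
  then have "(U * B) * k = (V * A) * k" by (simp add: ac_simps)
  then have "U * B = V * A" using assms(4) by simp
  then show ?thesis using assms(2,3) by (simp add: frac_eq_eq ac_simps)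
qed

lemma ratio_lemma:
  fixes z :: "'a::field"
  assumes "z \<noteq> 0" "z ^ a = z ^ b" "z ^ m = 1" "gcd (int a - int b) (int m) = 1"
  shows "z = 1"
proof -
  obtain s t where st: "s * (int a - int b) + t * int m = 1"
    using bezout_int[of "int a - int b" "int m"] assms(4) by auto
  have d: "z powi (int a - int b) = 1"
    using assms by (simp add: power_int_diff)
  have e: "z powi (int m) = 1" using assms by simp
  have "z = z powi (s * (int a - int b) + t * int m)" using st by simp
  also have "\<dots> = (z powi (int a - int b)) powi s * (z powi (int m)) powi t"
    using assms(1) by (simp add: power_int_add mult.commute[of s] mult.commute[of t] power_int_power flip: power_int_mult)
  also have "\<dots> = 1" using d e by simp
  finally show ?thesis .
qed

lemma card_zero:
  "of_nat (card (UNIV :: 'a::{field,finite} set)) = (0::'a)"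
proof -
  have "(\<Sum>x\<in>UNIV. x + 1) = (\<Sum>x\<in>(UNIV::'a set). x)"
    by (rule sum.reindex_bij_witness[of _ "\<lambda>y. y - 1" "\<lambda>y. y + 1"]) auto
  then show ?thesis by (simp add: sum.distrib)
qed

lemma char_facts:
  assumes "prime p" "k \<ge> 1" "card (UNIV :: 'a::{field,finite} set) = (p ^ k) ^ 2"
  shows "CHAR('a) = p"
proof -
  have pc: "prime CHAR('a)"
    using prime_CHAR_semidom[where ?'a = 'a] finite_imp_CHAR_pos[where ?'a='a] by auto
  have "CHAR('a) dvd card (UNIV :: 'a set)"
    using card_zero[where ?'a='a] of_nat_eq_0_iff_char_dvd by blast
  then have "CHAR('a) dvd p ^ (k * 2)" using assms(3)
    by (simp add: power_mult)
  then have "CHAR('a) dvd p" using pc prime_dvd_power by blast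
  then show ?thesis using pc assms(1) by (simp add: primes_dvd_imp_eq)
qed


theorem mainTheorem18:
  fixes q i2 r :: nat and b :: "'a::{field,finite}"
  assumes "prime_power q" and "card (UNIV :: 'a set) = q ^ 2" and "q mod 4 = 1"
    and "even i2" and "0 < i2" and "2 * i2 < q + 1"
    and "0 < r"
    and "gcd r (q - 1) = 1"
    and "gcd (int r - int i2) (int ((q + 1) div 2)) = 1"
    and "gcd (int r - 2 * int i2) (int ((q + 1) div 2)) = 1"
    and "b \<noteq> 0" and "(2 / b) ^ ((q + 1) div 2) = 1"
  shows "permutation_polynomial
           (monom 1 r * (1 - monom 1 ((q ^ 2 - 1) div 2) + monom b (i2 * (q - 1))))"
proof -
  from assms(1) obtain p k where pk: "prime p" "k \<ge> 1" "q = p ^ k"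
    unfolding prime_power_def by auto
  have charp: "CHAR('a) = p" using char_facts[OF pk(1,2)] assms(2) pk(3) by simp
  have frob: "(x + y) ^ q = x ^ q + y ^ q" for x y :: 'a
    using freshmans_dream'[of q k x y] charp pk by simp
  have qodd: "odd q" using assms(3) by presburger
  have q1: "q \<ge> 1" using qodd by (cases q) auto
  have p2: "p \<noteq> 2"
  proof
    assume "p = 2"
    then have "even q" using pk(2,3) by simp
    then show False using qodd by simp
  qed
  have two_nz: "(2::'a) \<noteq> 0"
  proof
    assume "(2::'a) = 0"
    then have "of_nat 2 = (0::'a)" by simp
    then have "p dvd 2" using of_nat_eq_0_iff_char_dvd charp by metis
    then show False using p2 pk(1) primes_dvd_imp_eq[of p 2] by auto
  qed
  have one_neg: "(1::'a) \<noteq> -1"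
  proof
    assume "(1::'a) = -1"
    then have "(1::'a) + 1 = 0" by (metis add.right_inverse)
    then show False using two_nz by (simp add: one_add_one)
  qed
  define m where "m = (q + 1) div 2"
  have qm: "q + 1 = 2 * m" using qodd m_def by presburger
  have modd: "odd m" using assms(3) m_def by presburger
  have N: "(q ^ 2 - 1) div 2 = (q - 1) * m"
  proof -
    have "q ^ 2 - 1 = (q - 1) * (q + 1)" using q1
      by (simp add: power2_eq_square algebra_simps)
    also have "\<dots> = 2 * ((q - 1) * m)" using qm by simp
    finally show ?thesis by simp
  qed
  have rodd: "odd r"
  proof
    assume "even r"
    moreover have "even (q - 1)" using qodd q1 by simp
    ultimately have "2 dvd gcd r (q - 1)" by (rule gcd_greatest)
    then have "(2::nat) dvd 1" using assms(8) by (simp only:)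
    then show False by simp
  qed
  define c where "c = 2 / b"
  have cm: "c ^ m = 1" using assms(12) m_def c_def by simp
  have cnz: "c \<noteq> 0" using two_nz assms(11) c_def by simp
  have cq1: "c ^ (q + 1) = 1" using cm qm by (simp add: power_mult mult.commute[of 2])
  have cq: "c ^ q = 1 / c" using cq1 cnz by (simp add: field_simps)
  have two_q: "(2::'a) ^ q = 2" using frob[of 1 1] by (simp add: one_add_one)
  have cb: "c * b = 2" using c_def assms(11) by simp
  have bc: "b = 2 / c" using cb cnz by (simp add: eq_divide_eq mult.commute)
  have bq: "b ^ q = 2 * c"
  proof -
    have "b ^ q = 2 ^ q / c ^ q" unfolding bc by (rule power_divide)
    also have "\<dots> = 2 / (1 / c)" unfolding two_q cq ..
    also have "\<dots> = 2 * c" by simp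
    finally show ?thesis .
  qed
  have bq1: "b ^ (q - 1) = c ^ 2"
  proof -
    have "b ^ (q - 1) * b = b ^ q" using q1 by (rule pm)
    then have "b ^ (q - 1) * b = 2 * c" using bq by simp
    then have "b ^ (q - 1) = 2 * c / b" using assms(11) by (simp add: eq_divide_eq)
    also have "\<dots> = c * (2 / b)" by simp
    finally show ?thesis by (simp add: c_def power2_eq_square)
  qed
  define G where "G = (\<lambda>u::'a. 1 - u ^ m + b * u ^ i2)"
  define F where "F = (\<lambda>x::'a. x ^ r * G (x ^ (q - 1)))"
  have polyF: "poly (monom 1 r * (1 - monom 1 ((q ^ 2 - 1) div 2) + monom b (i2 * (q - 1)))) = F"
    unfolding N by (simp add: F_def G_def fun_eq_iff poly_monom power_mult mult.commute[of i2])
  have card: "card (UNIV :: 'a set) = q ^ 2" by (rule assms(2))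
  have key: "G (x ^ (q - 1)) \<noteq> 0 \<and> F x ^ ((q - 1) * m) = (x ^ (q - 1)) ^ m \<and>
     (((x ^ (q - 1)) ^ m = 1 \<and> F x ^ (q - 1) = (x ^ (q - 1)) ^ r * c ^ 2 / ((x ^ (q - 1)) ^ i2) ^ 2) \<or>
      ((x ^ (q - 1)) ^ m = -1 \<and> F x ^ (q - 1) = (x ^ (q - 1)) ^ r * c / (x ^ (q - 1)) ^ i2))"
    if x: "x \<noteq> 0" for x :: 'a
  proof -
    define u where "u = x ^ (q - 1)"
    define e where "e = u ^ m"
    define w where "w = u ^ i2"
    have unz: "u \<noteq> 0" using x u_def by simp
    have wnz: "w \<noteq> 0" using unz w_def by simp
    have xq2: "x ^ (q ^ 2) = x" using pow_card_same[of x] card by simp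
    have uq1: "u ^ (q + 1) = 1"
    proof -
      have "q ^ 2 = Suc ((q - 1) * (q + 1))" using q1
        by (cases q) (auto simp: power2_eq_square)
      then have "x * x ^ ((q - 1) * (q + 1)) = x" using xq2 by simp
      then have "x ^ ((q - 1) * (q + 1)) = 1" using x by simp
      then show ?thesis by (simp only: u_def power_mult[symmetric])
    qed
    have e2: "e ^ 2 = 1"
    proof -
      have "e ^ 2 = u ^ (m * 2)" by (simp only: e_def power_mult)
      also have "m * 2 = q + 1" using qm by simp
      finally show ?thesis using uq1 by simp
    qed
    have ee: "e = 1 \<or> e = -1" using e2 power2_eq_1_iff by blast
    have ei2: "e ^ i2 = 1"
    proof -
      obtain j where "i2 = 2 * j" using assms(4) by blast
      then show ?thesis using e2 by (simp add: power_mult)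
    qed
    have wm: "w ^ m = 1"
    proof -
      have "w ^ m = u ^ (i2 * m)" by (simp only: w_def power_mult)
      also have "\<dots> = e ^ i2" by (simp only: e_def mult.commute[of i2] power_mult)
      finally show ?thesis using ei2 by simp
    qed
    have wq1: "w ^ (q + 1) = 1" using wm qm by (simp add: power_mult mult.commute[of 2])
    have wq: "w ^ q = 1 / w" using wq1 wnz by (simp add: field_simps)
    have wq1': "w ^ (q - 1) = 1 / w ^ 2"
    proof -
      have "w ^ (q - 1) * w ^ 2 = w ^ (q + 1)" using q1 by (simp flip: power_add)
      then show ?thesis using wq1 wnz by (simp add: field_simps)
    qed
    have Gu: "G u = 1 - e + b * w" by (simp add: G_def e_def w_def)
    have Fx: "F x = x ^ r * G u" by (simp add: F_def u_def)
    have xr: "(x ^ r) ^ (q - 1) = u ^ r" by (simp add: u_def flip: power_mult) (simp add: mult.commute)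
    have Fq1: "F x ^ (q - 1) = u ^ r * G u ^ (q - 1)" using Fx xr by (simp add: power_mult_distrib)
    have urm: "(u ^ r) ^ m = e"
    proof -
      have "(u ^ r) ^ m = e ^ r" by (simp add: e_def flip: power_mult) (simp add: mult.commute)
      then show ?thesis using ee rodd by auto
    qed
    from ee show ?thesis
    proof
      assume e1: "e = 1"
      have GH: "G u = b * w" using Gu e1 by simp
      have Gnz: "G u \<noteq> 0" using GH assms(11) wnz by simp
      have Gq: "G u ^ (q - 1) = c ^ 2 / w ^ 2" using GH bq1 wq1' by (simp add: power_mult_distrib)
      have F1: "F x ^ (q - 1) = u ^ r * c ^ 2 / w ^ 2" using Fq1 Gq by simp
      have sw: "(y ^ 2) ^ m = (y ^ m) ^ 2" for y :: 'a
        by (simp only: power_mult[symmetric] mult.commute)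
      have "F x ^ ((q - 1) * m) = (u ^ r * c ^ 2 / w ^ 2) ^ m" by (simp only: power_mult F1)
      also have "\<dots> = (u ^ r) ^ m * (c ^ 2) ^ m / (w ^ 2) ^ m"
        by (simp only: power_mult_distrib power_divide)
      finally have "F x ^ ((q - 1) * m) = (u ^ r) ^ m * (c ^ m) ^ 2 / (w ^ m) ^ 2"
        by (simp only: sw)
      then have "F x ^ ((q - 1) * m) = e" using urm cm wm by simp
      then show ?thesis using Gnz F1 e1 unfolding e_def w_def u_def by simp
    next
      assume e1: "e = -1"
      have GH: "G u = 2 + b * w" using Gu e1 by simp
      have Gnz: "G u \<noteq> 0"
      proof
        assume "G u = 0"
        then have "b * w = - 2" using GH by (simp add: add_eq_0_iff)
        then have "w * b = - 2" by (simp add: mult.commute)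
        then have "w = (- 2) / b" using assms(11) by (simp only: eq_divide_eq) simp
        then have "w = - c" by (simp add: c_def)
        then have "w ^ m = - (c ^ m)" using modd by simp
        then have "(1::'a) = -1" using wm cm by simp
        then show False using one_neg by simp
      qed
      have Gqq: "G u ^ q = c / w * G u"
      proof -
        have "G u ^ q = 2 ^ q + b ^ q * w ^ q" using GH frob by (simp add: power_mult_distrib)
        also have "\<dots> = 2 + 2 * c / w" using two_q bq wq by simp
        also have "\<dots> = c / w * G u"
        proof -
          have "c / w * G u = c / w * 2 + c / w * (b * w)" using GH by (simp add: distrib_left)
          also have "c / w * (b * w) = c * b" using wnz by simp
          finally show ?thesis using cb by simp
        qed
        finally show ?thesis .
      qed
      have Gq: "G u ^ (q - 1) = c / w"
      proof -
        have "G u ^ (q - 1) * G u = G u ^ q" using q1 by (rule pm)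
        then have "G u ^ (q - 1) * G u = (c / w) * G u" using Gqq by (simp only:)
        then show ?thesis using Gnz mult_right_cancel by blast
      qed
      have F1: "F x ^ (q - 1) = u ^ r * c / w" using Fq1 Gq by simp
      have "F x ^ ((q - 1) * m) = (u ^ r * c / w) ^ m" by (simp only: power_mult F1)
      also have "\<dots> = (u ^ r) ^ m * c ^ m / w ^ m"
        by (simp only: power_mult_distrib power_divide)
      finally have "F x ^ ((q - 1) * m) = (u ^ r) ^ m * c ^ m / w ^ m" .
      then have "F x ^ ((q - 1) * m) = e" using urm cm wm by simp
      then show ?thesis using Gnz F1 e1 unfolding e_def w_def u_def by simp
    qed
  qed
  have F0: "F 0 = 0" using assms(7) by (simp add: F_def)
  have Fnz: "F x \<noteq> 0" if "x \<noteq> 0" for x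
    using key[OF that] that by (simp add: F_def)
  have inj: "inj F"
  proof (rule injI)
    fix x y assume eq: "F x = F y"
    show "x = y"
    proof (cases "x = 0 \<or> y = 0")
      case True
      then show ?thesis using eq F0 Fnz by fastforce
    next
      case False
      then have x: "x \<noteq> 0" and y: "y \<noteq> 0" by auto
      define u where "u = x ^ (q - 1)"
      define v where "v = y ^ (q - 1)"
      have unz: "u \<noteq> 0" "v \<noteq> 0" using x y u_def v_def by auto
      have kx: "G u \<noteq> 0 \<and> F x ^ ((q - 1) * m) = u ^ m \<and>
       ((u ^ m = 1 \<and> F x ^ (q - 1) = u ^ r * c ^ 2 / (u ^ i2) ^ 2) \<or>
        (u ^ m = -1 \<and> F x ^ (q - 1) = u ^ r * c / u ^ i2))" using key[OF x] u_def by simp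
      have ky: "G v \<noteq> 0 \<and> F y ^ ((q - 1) * m) = v ^ m \<and>
       ((v ^ m = 1 \<and> F y ^ (q - 1) = v ^ r * c ^ 2 / (v ^ i2) ^ 2) \<or>
        (v ^ m = -1 \<and> F y ^ (q - 1) = v ^ r * c / v ^ i2))" using key[OF y] v_def by simp
      have kx1: "G u \<noteq> 0" and kx2: "F x ^ ((q - 1) * m) = u ^ m"
        and kx3: "(u ^ m = 1 \<and> F x ^ (q - 1) = u ^ r * c ^ 2 / (u ^ i2) ^ 2) \<or>
        (u ^ m = -1 \<and> F x ^ (q - 1) = u ^ r * c / u ^ i2)" using kx by blast+
      have ky1: "G v \<noteq> 0" and ky2: "F y ^ ((q - 1) * m) = v ^ m"
        and ky3: "(v ^ m = 1 \<and> F y ^ (q - 1) = v ^ r * c ^ 2 / (v ^ i2) ^ 2) \<or>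
        (v ^ m = -1 \<and> F y ^ (q - 1) = v ^ r * c / v ^ i2)" using ky by blast+
      have emeq: "u ^ m = v ^ m" using kx2 ky2 eq by simp
      define z where "z = u / v"
      have znz: "z \<noteq> 0" using unz z_def by simp
      have zm: "z ^ m = 1" using emeq unz by (simp add: z_def power_divide)
      have uv: "u = v"
      proof (cases "u ^ m = 1")
        case True
        then have vm: "v ^ m = 1" using emeq by simp
        have fx: "F x ^ (q - 1) = u ^ r * c ^ 2 / (u ^ i2) ^ 2" using kx3 True one_neg by auto
        have fy: "F y ^ (q - 1) = v ^ r * c ^ 2 / (v ^ i2) ^ 2" using ky3 vm one_neg by auto
        have "u ^ r * c ^ 2 / (u ^ i2) ^ 2 = v ^ r * c ^ 2 / (v ^ i2) ^ 2"
          using fx fy eq by simp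
        note eqn = this
        have "u ^ r / v ^ r = (u ^ i2) ^ 2 / (v ^ i2) ^ 2"
          by (rule cross[OF _ _ _ _ eqn]) (simp_all add: unz cnz)
        moreover have "z ^ (2 * i2) = (z ^ i2) ^ 2" by (simp only: power_mult[symmetric] mult.commute)
        ultimately have "z ^ r = z ^ (2 * i2)"
          by (simp only: z_def power_divide)
        moreover have "gcd (int r - int (2 * i2)) (int m) = 1" using assms(10) m_def by simp
        ultimately have "z = 1" by (rule ratio_lemma[OF znz _ zm])
        then show ?thesis using unz z_def by simp
      next
        case False
        then have um: "u ^ m = -1" using kx3 by blast
        then have vm: "v ^ m = -1" using emeq by simp
        have fx: "F x ^ (q - 1) = u ^ r * c / u ^ i2" using kx3 um one_neg by auto
        have fy: "F y ^ (q - 1) = v ^ r * c / v ^ i2" using ky3 vm one_neg by auto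
        have "u ^ r * c / u ^ i2 = v ^ r * c / v ^ i2"
          using fx fy eq by simp
        note eqn = this
        have "u ^ r / v ^ r = u ^ i2 / v ^ i2"
          by (rule cross[OF _ _ _ _ eqn]) (simp_all add: unz cnz)
        then have "z ^ r = z ^ i2"
          by (simp only: z_def power_divide)
        moreover have "gcd (int r - int i2) (int m) = 1" using assms(9) m_def by simp
        ultimately have "z = 1" by (rule ratio_lemma[OF znz _ zm])
        then show ?thesis using unz z_def by simp
      qed
      have "x ^ r * G u = y ^ r * G v" using eq by (simp add: F_def u_def v_def)
      then have xr: "x ^ r = y ^ r" using uv kx1 by simp
      define t where "t = x / y"
      have tnz: "t \<noteq> 0" using x y t_def by simp
      have t1: "t ^ r = t ^ 0" using xr y by (simp add: t_def power_divide)
      have t2: "t ^ (q - 1) = 1" using uv y by (simp add: t_def power_divide u_def v_def)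
      have t3: "gcd (int r - int 0) (int (q - 1)) = 1" using assms(8)
        by (metis diff_zero gcd_int_int_eq of_nat_0 of_nat_1)
      have "t = 1" by (rule ratio_lemma[OF tnz t1 t2 t3])
      then show ?thesis using y t_def by simp
    qed
  qed
  then have "bij F" using finite_UNIV_inj_surj[of F] by (simp add: bij_def)
  then show ?thesis using polyF by (simp add: permutation_polynomial_def)
qed

end
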